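(* Under i.i.d. Rayleigh fading on all $2M$ links with average SNR $\bar\gamma$, as $\bar\gamma\to0$, $$\bar R_{SD}\sim\frac{\bar\gamma}{2\ln2}\sum_{k=1}^{2M}\frac1k,\qquad \bar R_{\rm conv}\sim\frac{\bar\gamma}{4\ln2}\sum_{k=1}^{M}\frac1k,$$ so that $\lim_{\bar\gamma\to0}\bar R_{SD}/\bar R_{\rm conv}=2\sum_{k=1}^{2M}\frac1k\big/\sum_{k=1}^M\frac1k$, which equals $3$ for $M=1$, tends to $2$ as $M\to\infty$, and lies in $[2,3]$ for all $M\ge1$.
   Context: Network of a source, $M$ relays, and a destination; SNRs $\gamma_{Sk},\gamma_{kD}$ of the $2M$ links are i.i.d. exponential with mean $\bar\gamma$ (Rayleigh fading). $\bar R_{SD}=M\int_0^\infty\log_2(1+x)f_\gamma(x)(F_\gamma(x))^{2M-1}dx$ with $f_\gamma(x)=e^{-x/\bar\gamma}/\bar\gamma$, $F_\gamma(x)=1-e^{-x/\bar\gamma}$ (the maximum average rate of the buffer-aided protocol). $\bar R_{\rm conv}=\frac12E\{\max_k\min\{\log_2(1+\gamma_{Sk}),\log_2(1+\gamma_{kD})\}\}$ is the average rate of conventional (non-buffer-aided) relay selection; in this i.i.d. Rayleigh case $\bar R_{\rm conv}=\frac M2\sum_{k=0}^{M-1}\binom{M-1}{k}\frac{(-1)^k}{(1+k)\ln2}e^{2(1+k)/\bar\gamma}E_1(2(1+k)/\bar\gamma)$, where $E_1(x)=\int_1^\infty e^{-xt}/t\,dt$. $f\sim g$ means $f/g\to1$.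 *)

theory Defs
  imports "HOL-Probability.Probability"
begin

text \<open>Rayleigh fading: SNR exponential with mean g (the average SNR \<gamma>-bar).\<close>
definition f_gamma :: "real \<Rightarrow> real \<Rightarrow> real" where
  "f_gamma g x = exp (- x / g) / g"

definition F_gamma :: "real \<Rightarrow> real \<Rightarrow> real" where
  "F_gamma g x = 1 - exp (- x / g)"

definition R_SD :: "nat \<Rightarrow> real \<Rightarrow> real" where
  "R_SD M g = real M * (LBINT x:{0..}. log 2 (1 + x) * f_gamma g x * (F_gamma g x) ^ (2 * M - 1))"

text \<open>Joint law of the 2M i.i.d. link SNRs: coordinate k < M is gamma_{Sk},
  coordinate M + k is gamma_{kD}; each is exponential with mean g (rate 1/g).\<close>
definition link_snrs :: "nat \<Rightarrow> real \<Rightarrow> (nat \<Rightarrow> real) measure" where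
  "link_snrs M g = PiM {..<2 * M} (\<lambda>_. density lborel (exponential_density (1 / g)))"

definition R_conv :: "nat \<Rightarrow> real \<Rightarrow> real" where
  "R_conv M g = 1 / 2 * (\<integral>\<gamma>. Max ((\<lambda>k. min (log 2 (1 + \<gamma> k)) (log 2 (1 + \<gamma> (M + k)))) ` {..<M})
                           \<partial>(link_snrs M g))"

end

theory Submission
  imports Defs "HOL-Analysis.Harmonic_Numbers" "HOL-Real_Asymp.Real_Asymp"
begin


lemma hsum: "(\<Sum>k=1..n. 1 / real k) = harm n"
  by (simp add: harm_def divide_inverse)

lemma harm_2_le: "2 * harm (2*M) \<le> (3 * harm M :: real)"
proof (induction M)
  case 0 then show ?case by (simp add: harm_def)
next
  case (Suc M)
  have e: "2 * Suc M = Suc (Suc (2*M))" by simp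
  have "2 * harm (2 * Suc M) = (2::real) * harm (2*M) + 2 / (2*real M+1) + 2/(2*real M+2)"
    unfolding e by (simp add: harm_Suc field_simps)
  also have "\<dots> \<le> 3 * harm M + 3 / (real M+1)"
  proof -
    have a: "2 / (2*real M+1) \<le> 2/(real M+1)"
      by (intro divide_left_mono) auto
    have b: "2/(2*real M+2) = 1/(real M+1)" by (simp add: field_simps)
    have "2 / (2*real M+1) + 2/(2*real M+2) \<le> 3 / (real M+1)"
      using a b by (simp add: add_divide_distrib[symmetric])
    then show ?thesis using Suc by linarith
  qed
  also have "\<dots> = 3 * harm (Suc M)" by (simp add: harm_Suc field_simps)
  finally show ?case .
qed

lemma harm_D_le: "harm (2*M) - harm M + 1 / (2*real M+1) \<le> (1::real)"
proof (induction M)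
  case 0 then show ?case by (simp add: harm_def)
next
  case (Suc M)
  have e: "2 * Suc M = Suc (Suc (2*M))" by simp
  have "harm (2 * Suc M) - harm (Suc M) + 1 / (2*real (Suc M)+1) = (
     (harm (2*M) - harm M + 1/(2*real M+1)) - 1/(2*real M+2) + 1/(2*real M+3) :: real)"
  proof -
    have h1: "harm (Suc (Suc (2*M))) = harm (2*M) + 1/(2*real M+1) + 1/(2*real M+2::real)"
      by (simp add: harm_Suc divide_inverse add_ac)
    have h2: "harm (Suc M) = harm M + 1/(2*real M+2) + 1/(2*real M+2::real)"
      by (simp add: harm_Suc field_simps)
    have h3: "2*real (Suc M) + 1 = 2*real M + 3" by simp
    show ?thesis unfolding e h1 h2 h3 by simp
  qed
  also have "\<dots> \<le> 1"
  proof -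
    have "1/(2*real M+3) \<le> 1/(2*real M+2)" by (simp add: field_simps)
    then show ?thesis using Suc by linarith
  qed
  finally show ?case .
qed

lemma ratio_lim: "(\<lambda>M::nat. 2 * harm (2*M) / harm M) \<longlonglongrightarrow> (2::real)"
proof -
  have ev: "\<forall>\<^sub>F M in sequentially. 2 + 2 * ((harm (2*M) - harm M) / harm M) = 2 * harm (2*M) / (harm M :: real)"
    using eventually_gt_at_top[of 0]
  proof eventually_elim
    case (elim M)
    have h0: "0 < (harm M :: real)" using elim by simp
    then have h: "harm M \<noteq> (0::real)" by linarith
    have "2 + 2 * ((harm (2*M) - harm M) / harm M) = 2 + (2 * harm (2*M) / harm M - 2 * harm M / harm M)"
      by (simp add: diff_divide_distrib)
    also have "\<dots> = 2 * harm (2*M) / (harm M :: real)" using h by simp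
    finally show ?case .
  qed
  have inv: "(\<lambda>M. inverse (harm M :: real)) \<longlonglongrightarrow> 0"
    by (rule tendsto_inverse_0_at_top[OF harm_at_top])
  have "(\<lambda>M. (harm (2*M) - harm M) / harm M :: real) \<longlonglongrightarrow> 0"
  proof (rule tendsto_sandwich[OF _ _ tendsto_const inv])
    show "\<forall>\<^sub>F M in sequentially. 0 \<le> (harm (2*M) - harm M) / (harm M :: real)"
      by (intro always_eventually allI divide_nonneg_nonneg) (auto simp: harm_mono harm_nonneg)
    show "\<forall>\<^sub>F M in sequentially. (harm (2*M) - harm M) / harm M \<le> inverse (harm M :: real)"
      using eventually_gt_at_top[of 0]
    proof eventually_elim
      case (elim M)
      have "harm (2*M) - harm M \<le> (1::real)" using harm_D_le[of M]
        by (smt (verit) divide_nonneg_nonneg of_nat_0_le_iff)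
      then show ?case using harm_pos[OF elim, where 'a=real]
        by (simp add: divide_inverse mult_right_mono)
    qed
  qed
  then have "(\<lambda>M. 2 + 2 * ((harm (2*M) - harm M) / harm M) :: real) \<longlonglongrightarrow> 2 + 2 * 0"
    by (intro tendsto_intros)
  then show ?thesis using ev by (simp add: tendsto_cong)
qed



definition hdn :: "nat \<Rightarrow> real \<Rightarrow> real \<Rightarrow> real" where
  "hdn n m x = (if x < 0 then 0 else real n * (exp (-x/m)/m) * (1 - exp(-x/m))^(n-1))"

lemma hdn_nonneg: "m > 0 \<Longrightarrow> 0 \<le> hdn n m x"
  by (auto simp: hdn_def)

lemma hdn_meas[measurable]: "hdn n m \<in> borel_measurable borel"
  unfolding hdn_def by measurable

definition Pf :: "nat \<Rightarrow> real \<Rightarrow> real" where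
  "Pf n t = (\<Sum>j<n. (1 - exp (-t))^(Suc j) / real (Suc j))"

definition Gf :: "nat \<Rightarrow> real \<Rightarrow> real" where
  "Gf n t = Pf n t - t * (1 - (1 - exp (-t))^n)"

lemma Pf_deriv: "DERIV (Pf n) t :> 1 - (1 - exp (-t))^n"
proof -
  have "DERIV (Pf n) t :> (\<Sum>j<n. (1 - exp (-t))^j * exp (-t))"
    unfolding Pf_def
  proof (rule DERIV_sum)
    fix j
    have "DERIV (\<lambda>t. (1-exp(-t))^(Suc j)) t :> real (Suc j) * (1-exp(-t))^j * exp(-t)"
      by (rule derivative_eq_intros refl | simp)+
    from DERIV_cdivide[OF this, of "real (Suc j)"]
    show "DERIV (\<lambda>t. (1 - exp (-t))^(Suc j) / real (Suc j)) t :> (1 - exp (-t))^j * exp (-t)"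
      by simp
  qed
  also have "(\<Sum>j<n. (1 - exp (-t))^j * exp (-t)) = 1 - (1 - exp (-t))^n"
    using one_diff_power_eq[of "1 - exp (-t)" n] by (simp add: sum_distrib_left mult.commute)
  finally show ?thesis .
qed

lemma Gf_deriv: assumes "n \<ge> 1" shows "DERIV (Gf n) t :> t * (real n * exp (-t) * (1 - exp(-t))^(n-1))"
proof -
  have d: "DERIV (\<lambda>t. (1 - exp (-t))^n) t :> real n * (1 - exp(-t))^(n-1) * exp (-t)"
    by (auto intro!: derivative_eq_intros)
  have d2: "DERIV (\<lambda>t. t * (1 - (1 - exp (-t))^n)) t :> (1 - (1 - exp (-t))^n) - t * (real n * (1 - exp(-t))^(n-1) * exp (-t))"
    by (auto intro!: derivative_eq_intros d simp: algebra_simps)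
  have "DERIV (Gf n) t :> (1 - (1 - exp (-t))^n) - ((1 - (1 - exp (-t))^n) - t * (real n * (1 - exp(-t))^(n-1) * exp (-t)))"
    unfolding Gf_def[abs_def]
    by (intro DERIV_diff Pf_deriv d2)
  then show ?thesis by (simp add: algebra_simps)
qed

lemma one_minus_pow_le: assumes "0 \<le> y" "y \<le> 1" shows "1 - y^n \<le> real n * (1 - (y::real))"
proof -
  have "(\<Sum>i<n. y^i) \<le> (\<Sum>i<n. 1)" by (intro sum_mono) (simp add: assms power_le_one)
  then have "(1 - y) * (\<Sum>i<n. y^i) \<le> (1 - y) * real n" using assms by (intro mult_left_mono) auto
  then show ?thesis using one_diff_power_eq[of y n] by (simp add: mult.commute)
qed

lemma Gf_0: "Gf n 0 = 0"
  by (simp add: Gf_def Pf_def)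

lemma Gf_lim: "(Gf n \<longlongrightarrow> harm n) at_top"
proof -
  have e: "((\<lambda>t. exp (-t)) \<longlongrightarrow> (0::real)) at_top" by real_asymp
  have "(Pf n \<longlongrightarrow> (\<Sum>j<n. (1 - 0)^(Suc j) / real (Suc j))) at_top"
    unfolding Pf_def[abs_def] by (intro tendsto_intros e) auto
  then have P: "(Pf n \<longlongrightarrow> harm n) at_top"
    by (simp add: harm_altdef divide_inverse)
  have te: "((\<lambda>t. real n * (t * exp (-t))) \<longlongrightarrow> (0::real)) at_top"
  proof -
    have "((\<lambda>t. t * exp (-t)) \<longlongrightarrow> (0::real)) at_top" by real_asymp
    from tendsto_mult[OF tendsto_const[of "real n"] this] show ?thesis by simp
  qed
  have Q: "((\<lambda>t::real. t * (1 - (1 - exp (-t))^n)) \<longlongrightarrow> 0) at_top"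
  proof (rule tendsto_sandwich[where f="\<lambda>_. 0" and h="\<lambda>t. real n * (t * exp (-t))"])
    show "((\<lambda>_. 0::real) \<longlongrightarrow> 0) at_top" by simp
    show "((\<lambda>t. real n * (t * exp (-t))) \<longlongrightarrow> 0) at_top" by (rule te)
    show "\<forall>\<^sub>F t::real in at_top. 0 \<le> t * (1 - (1 - exp (- t)) ^ n)"
      by (rule eventually_at_top_linorderI[of 0]) (auto intro!: mult_nonneg_nonneg simp: power_le_one)
    show "\<forall>\<^sub>F t::real in at_top. t * (1 - (1 - exp (- t)) ^ n) \<le> real n * (t * exp (- t))"
    proof (rule eventually_at_top_linorderI[of 0])
      fix t :: real assume elim: "0 \<le> t"
      have "1 - (1 - exp (- t)) ^ n \<le> real n * (1 - (1 - exp (-t)))"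
        by (rule one_minus_pow_le) (use elim in auto)
      then have "t * (1 - (1 - exp (- t)) ^ n) \<le> t * (real n * exp (-t))"
        using elim by (intro mult_left_mono) auto
      then show "t * (1 - (1 - exp (- t)) ^ n) \<le> real n * (t * exp (- t))" by (simp add: algebra_simps)
    qed
  qed
  have "((\<lambda>t. Pf n t - t * (1 - (1 - exp (-t))^n)) \<longlongrightarrow> harm n - 0) at_top"
    by (intro tendsto_diff P Q)
  then show ?thesis by (simp add: Gf_def[abs_def])
qed

lemma EH: assumes "n \<ge> 1"
  shows "integrable lborel (\<lambda>t. hdn n 1 t * t)" "(\<integral>t. hdn n 1 t * t \<partial>lborel) = harm n"
proof -
  have "(\<integral>\<^sup>+x. ennreal (x * (real n * exp (-x) * (1 - exp(-x))^(n-1))) * indicator {0 ..} x \<partial>lborel) = harm n - Gf n 0"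
    by (rule nn_integral_FTC_atLeast[OF _ Gf_deriv[OF assms] _ Gf_lim]) auto
  also have "(\<lambda>x. ennreal (x * (real n * exp (-x) * (1 - exp(-x))^(n-1))) * indicator {0 ..} x) = (\<lambda>x. ennreal (hdn n 1 x * x))"
    by (auto simp: hdn_def fun_eq_iff split: split_indicator)
  finally have nn: "(\<integral>\<^sup>+x. ennreal (hdn n 1 x * x) \<partial>lborel) = ennreal (harm n)" by (simp add: Gf_0)
  have nonneg: "AE x in lborel. 0 \<le> hdn n 1 x * x"
    by (auto simp: hdn_def)
  show int: "integrable lborel (\<lambda>t. hdn n 1 t * t)"
    by (rule integrableI_nn_integral_finite[OF _ nonneg nn]) simp
  have "ennreal (\<integral>t. hdn n 1 t * t \<partial>lborel) = ennreal (harm n)"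
    using nn_integral_eq_integral[OF int nonneg] nn by simp
  moreover have "0 \<le> (\<integral>t. hdn n 1 t * t \<partial>lborel)" by (rule integral_nonneg_AE[OF nonneg])
  ultimately show "(\<integral>t. hdn n 1 t * t \<partial>lborel) = harm n"
    by (simp add: harm_nonneg)
qed

lemma hdn_scale: assumes "m > 0" shows "hdn n m (m * x) = hdn n 1 x / m"
  using assms by (auto simp: hdn_def mult_less_0_iff)

lemma scale_int: assumes "m > 0"
  shows "(\<integral>x. hdn n m x * log 2 (1+x) \<partial>lborel) / m = (\<integral>t. hdn n 1 t * (log 2 (1 + m*t) / m) \<partial>lborel)"
proof -
  have "(\<integral>x. hdn n m x * log 2 (1+x) \<partial>lborel) = \<bar>m\<bar> *\<^sub>R (\<integral>x. hdn n m (0 + m * x) * log 2 (1 + (0 + m*x)) \<partial>lborel)"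
    by (rule lborel_integral_real_affine) (use assms in simp)
  also have "\<dots> = m * (\<integral>x. hdn n 1 x * (log 2 (1 + m*x) / m) \<partial>lborel)"
    using assms by (simp add: hdn_scale)
  finally show ?thesis using assms by simp
qed

lemma ln_quot_lim: "((\<lambda>s. ln (1 + s * t) / s) \<longlongrightarrow> t) (at (0::real))"
proof -
  have "((\<lambda>s. ln (1 + s * t)) has_field_derivative t) (at 0)"
    by (auto intro!: derivative_eq_intros)
  then show ?thesis by (simp add: has_field_derivative_iff)
qed

lemma limA: assumes "n \<ge> 1"
  shows "((\<lambda>m. (\<integral>x. hdn n m x * log 2 (1+x) \<partial>lborel) / m) \<longlongrightarrow> harm n / ln 2) (at_right 0)"
proof -
  have ev: "\<forall>\<^sub>F m in at_right 0. (\<integral>t. hdn n 1 t * (log 2 (1 + m*t) / m) \<partial>lborel) = (\<integral>x. hdn n m x * log 2 (1+x) \<partial>lborel) / m"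
    using eventually_at_right_less[of "0::real"] by eventually_elim (simp add: scale_int)
  have hl: "harm n / ln 2 = (\<integral>t. hdn n 1 t * t / ln 2 \<partial>lborel)"
    using EH[OF assms] by simp
  have "((\<lambda>m. (\<integral>t. hdn n 1 t * (log 2 (1 + m*t) / m) \<partial>lborel)) \<longlongrightarrow> harm n / ln 2) (at_right 0)"
  proof (rule tendsto_at_right_sequentially[of 0 1])
    fix S :: "nat \<Rightarrow> real" assume S: "\<And>k. 0 < S k" "\<And>k. S k < 1" "S \<longlonglongrightarrow> 0"
    have Sat: "filterlim S (at 0) sequentially"
      using S by (intro filterlim_atI) (auto intro!: always_eventually simp: less_imp_neq[symmetric])
    show "(\<lambda>k. \<integral>t. hdn n 1 t * (log 2 (1 + S k*t) / S k) \<partial>lborel) \<longlonglongrightarrow> harm n / ln 2"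
      unfolding hl
    proof (rule integral_dominated_convergence[where w="\<lambda>t. hdn n 1 t * t / ln 2"])
      show "integrable lborel (\<lambda>t. hdn n 1 t * t / ln 2)"
        using EH(1)[OF assms] by simp
      show "(\<lambda>t. hdn n 1 t * t / ln 2) \<in> borel_measurable lborel" by measurable
      show "(\<lambda>t. hdn n 1 t * (log 2 (1 + S k*t) / S k)) \<in> borel_measurable lborel" for k by measurable
      show "AE t in lborel. (\<lambda>k. hdn n 1 t * (log 2 (1 + S k*t) / S k)) \<longlonglongrightarrow> hdn n 1 t * t / ln 2"
      proof (rule AE_I2)
        fix t :: real
        have "(\<lambda>k. ln (1 + S k * t) / S k) \<longlonglongrightarrow> t"
          using filterlim_compose[OF ln_quot_lim Sat] by (simp add: o_def)
        then have "(\<lambda>k. hdn n 1 t * ((ln (1 + S k * t) / S k) / ln 2)) \<longlonglongrightarrow> hdn n 1 t * (t / ln 2)"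
          by (intro tendsto_intros) auto
        then show "(\<lambda>k. hdn n 1 t * (log 2 (1 + S k*t) / S k)) \<longlonglongrightarrow> hdn n 1 t * t / ln 2"
          by (simp add: log_def mult.commute)
      qed
      show "AE t in lborel. norm (hdn n 1 t * (log 2 (1 + S k*t) / S k)) \<le> hdn n 1 t * t / ln 2" for k
      proof (rule AE_I2)
        fix t :: real
        show "norm (hdn n 1 t * (log 2 (1 + S k*t) / S k)) \<le> hdn n 1 t * t / ln 2"
        proof (cases "t < 0")
          case True then show ?thesis by (simp add: hdn_def)
        next
          case False
          have sk: "0 < S k" by (rule S)
          have st: "0 \<le> S k * t" using False sk by simp
          have l1: "0 \<le> ln (1 + S k * t)" using st by simp
          have l2: "ln (1 + S k * t) \<le> S k * t" by (rule ln_add_one_self_le_self[OF st])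
          have q1: "0 \<le> log 2 (1 + S k*t) / S k" using l1 sk by (simp add: log_def)
          have q2: "log 2 (1 + S k*t) / S k \<le> t / ln 2"
            using l2 sk by (simp add: log_def field_simps)
          have h0: "0 \<le> hdn n 1 t" by (rule hdn_nonneg) simp
          have "norm (hdn n 1 t * (log 2 (1 + S k*t) / S k)) = hdn n 1 t * (log 2 (1 + S k*t) / S k)"
            unfolding real_norm_def by (rule abs_of_nonneg, rule mult_nonneg_nonneg[OF h0 q1])
          also have "\<dots> \<le> hdn n 1 t * (t / ln 2)" using q2 h0 by (rule mult_left_mono)
          finally show ?thesis by simp
        qed
      qed
    qed
  qed simp
  then show ?thesis using ev by (rule Lim_transform_eventually)
qed

lemma hdn_cdf: assumes m: "m > 0" and n: "n \<ge> 1"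
  shows "(\<integral>\<^sup>+x. ennreal (hdn n m x) * indicator {..a} x \<partial>lborel) = ennreal (if 0 \<le> a then (1 - exp(-a/m))^n else 0)"
proof (cases "0 \<le> a")
  case False
  then have "(\<lambda>x. ennreal (hdn n m x) * indicator {..a} x) = (\<lambda>x. 0)"
    by (auto simp: fun_eq_iff hdn_def split: split_indicator)
  then show ?thesis using False by simp
next
  case True
  define F where "F x = (1 - exp(-x/m))^n" for x
  define f where "f x = real n * (exp (-x/m)/m) * (1 - exp(-x/m))^(n-1)" for x
  have d: "DERIV F x :> f x" for x
  proof -
    have d1: "DERIV (\<lambda>x. 1 - exp(-x/m)) x :> exp(-x/m) * (1/m)"
      using m by (auto intro!: derivative_eq_intros)
    from DERIV_power[OF d1, of n] show ?thesis
      unfolding F_def f_def by (simp add: field_simps)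
  qed
  have hi: "(f has_integral (F a - F 0)) {0..a}"
    by (rule fundamental_theorem_of_calculus[OF True])
       (auto simp: has_real_derivative_iff_has_vector_derivative[symmetric] intro!: DERIV_subset[OF d])
  have "(\<integral>\<^sup>+x. ennreal (indicator {0..a} x * f x) \<partial>lborel) = ennreal (F a - F 0)"
  proof (rule nn_integral_has_integral_lebesgue[OF _ hi])
    fix x assume "x \<in> {0..a}"
    then have "0 \<le> x / m" using m by simp
    then have "exp (-x/m) \<le> 1" by simp
    then have "0 \<le> 1 - exp (-x/m)" by linarith
    then show "0 \<le> f x" unfolding f_def using m
      by (intro mult_nonneg_nonneg divide_nonneg_nonneg zero_le_power) auto
  qed
  also have "(\<lambda>x. ennreal (indicator {0..a} x * f x)) = (\<lambda>x. ennreal (hdn n m x) * indicator {..a} x)"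
    by (auto simp: fun_eq_iff hdn_def f_def split: split_indicator)
  finally show ?thesis using True n by (simp add: F_def power_0_left)
qed



definition NN :: "real \<Rightarrow> real measure" where "NN g = density lborel (exponential_density (1 / g))"

context
  fixes M :: nat and g :: real
  assumes M1: "M \<ge> 1" and gpos: "g > 0"
begin

definition "PPm = PiM {..<2*M} (\<lambda>_. NN g)"

lemma N_prob: "prob_space (NN g)"
  unfolding NN_def by (rule prob_space_exponential_density) (use gpos in simp)

interpretation N: prob_space "NN g" by (rule N_prob)

interpretation Q: product_prob_space "\<lambda>_. NN g" "{..<2*M}"
  by unfold_locales

lemma sets_NN[simp, measurable_cong]: "sets (NN g) = sets borel"
  by (simp add: NN_def)

lemma space_NN[simp]: "space (NN g) = UNIV"
  by (simp add: NN_def)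

lemma PP_prob: "prob_space PPm"
  unfolding PPm_def by (rule Q.P.prob_space_axioms)

interpretation P: prob_space PPm by (rule PP_prob)

lemma comp_meas[measurable]: "i < 2*M \<Longrightarrow> (\<lambda>\<omega>. \<omega> i) \<in> borel_measurable PPm"
  unfolding PPm_def
  using measurable_component_singleton[of i "{..<2*M}" "\<lambda>_. NN g"]
  by (simp add: measurable_cong_sets[OF refl sets_NN])

lemma indep_coords: "P.indep_vars (\<lambda>_. borel) (\<lambda>i \<omega>. \<omega> i) {..<2*M}"
proof (subst P.indep_vars_iff_distr_eq_PiM')
  show "{..<2*M} \<noteq> {}" using M1 by (simp add: lessThan_empty_iff)
  show "(\<lambda>\<omega>. \<omega> i) \<in> borel_measurable PPm" if "i \<in> {..<2*M}" for i
    using that by (intro comp_meas) simp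
  have "distr PPm (PiM {..<2*M} (\<lambda>_. borel)) (\<lambda>x. \<lambda>i\<in>{..<2*M}. x i) = distr PPm PPm (\<lambda>x. x)"
    by (rule distr_cong) (auto simp: PPm_def space_PiM intro!: sets_PiM_cong)
  also have "\<dots> = PPm" by (rule distr_id)
  also have "PPm = PiM {..<2*M} (\<lambda>i. distr PPm borel (\<lambda>x. x i))"
    unfolding PPm_def
  proof (rule PiM_cong)
    fix i assume i: "i \<in> {..<2*M}"
    have "distr (PiM {..<2*M} (\<lambda>_. NN g)) borel (\<lambda>x. x i) = distr (PiM {..<2*M} (\<lambda>_. NN g)) (NN g) (\<lambda>x. x i)"
      by (rule distr_cong) auto
    also have "\<dots> = NN g" by (rule Q.PiM_component[OF i])
    finally show "NN g = distr (PiM {..<2*M} (\<lambda>_. NN g)) borel (\<lambda>x. x i)" by simp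
  qed simp
  finally show "distr PPm (PiM {..<2*M} (\<lambda>_. borel)) (\<lambda>x. \<lambda>i\<in>{..<2*M}. x i) = PiM {..<2*M} (\<lambda>i. distr PPm borel (\<lambda>x. x i))" .
qed

lemma indep_Z: "P.indep_vars (\<lambda>_. borel) (\<lambda>k \<omega>. min (\<omega> k) (\<omega> (M+k))) {..<M}"
proof -
  have 1: "P.indep_vars (\<lambda>j. PiM {j, M+j} (\<lambda>_. borel)) (\<lambda>j \<omega>. restrict (\<lambda>i. \<omega> i) {j, M+j}) {..<M}"
    by (rule P.indep_vars_restrict[OF indep_coords]) (auto simp: disjoint_family_on_def)
  have 2: "P.indep_vars (\<lambda>_. borel) (\<lambda>j \<omega>. (\<lambda>f. min (f j) (f (M+j))) (restrict (\<lambda>i. \<omega> i) {j, M+j})) {..<M}"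
    by (rule P.indep_vars_compose2[OF 1]) measurable
  show ?thesis
    by (rule P.indep_vars_cong[THEN iffD1, OF refl _ refl 2]) auto
qed

lemma NN_gt: "measure (NN g) {a<..} = (if 0 \<le> a then exp (-a/g) else 1)"
proof -
  have "emeasure (NN g) {..a} = erlang_CDF 0 (1/g) a"
    unfolding NN_def by (rule emeasure_erlang_density) (use gpos in simp)
  moreover have "0 \<le> erlang_CDF 0 (1/g) a" using gpos by (intro erlang_CDF_nonneg) simp
  ultimately have e: "measure (NN g) {..a} = erlang_CDF 0 (1/g) a"
    by (simp add: N.emeasure_eq_measure)
  have "measure (NN g) {a<..} = measure (NN g) (space (NN g) - {..a})"
    by (rule arg_cong[where f="measure (NN g)"]) auto
  also have "\<dots> = 1 - measure (NN g) {..a}" by (rule N.prob_compl) simp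
  finally show ?thesis using e by (simp add: erlang_CDF_0)
qed

definition Fz :: "real \<Rightarrow> real" where "Fz a = (if 0 \<le> a then 1 - exp (-a/(g/2)) else 0)"

lemma Z_gt: assumes k: "k < M"
  shows "P.prob {\<omega>\<in>space PPm. a < min (\<omega> k) (\<omega> (M+k))} = (measure (NN g) {a<..})^2"
proof -
  have set: "{\<omega>\<in>space PPm. a < min (\<omega> k) (\<omega> (M+k))} = {\<omega>\<in>space (PiM {..<2*M} (\<lambda>_. NN g)). \<forall>i\<in>{k, M+k}. \<omega> i \<in> {a<..}}"
    by (auto simp: PPm_def)
  have "emeasure PPm {\<omega>\<in>space PPm. a < min (\<omega> k) (\<omega> (M+k))} = (\<Prod>i\<in>{k, M+k}. emeasure (NN g) {a<..})"
    unfolding set unfolding PPm_def by (rule Q.emeasure_PiM_Collect) (use k in auto)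
  also have "\<dots> = ennreal ((measure (NN g) {a<..})^2)"
    using k by (simp add: N.emeasure_eq_measure power2_eq_square ennreal_mult)
  finally show ?thesis by (simp add: P.emeasure_eq_measure)
qed

lemma Z_le: assumes k: "k < M"
  shows "P.prob {\<omega>\<in>space PPm. min (\<omega> k) (\<omega> (M+k)) \<le> a} = Fz a"
proof -
  have mk: "M + k < 2*M" using k by simp
  have "{\<omega>\<in>space PPm. min (\<omega> k) (\<omega> (M+k)) \<le> a} = space PPm - {\<omega>\<in>space PPm. a < min (\<omega> k) (\<omega> (M+k))}"
    by auto
  then have "P.prob {\<omega>\<in>space PPm. min (\<omega> k) (\<omega> (M+k)) \<le> a} = 1 - P.prob {\<omega>\<in>space PPm. a < min (\<omega> k) (\<omega> (M+k))}"
    using k mk by (simp add: P.prob_compl)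
  also have "\<dots> = 1 - (measure (NN g) {a<..})^2" using Z_gt[OF k] by simp
  also have "\<dots> = Fz a"
  proof -
    have "exp (-a/g)^2 = exp (-a/(g/2))"
      by (simp add: power2_eq_square exp_add[symmetric] field_simps)
    then show ?thesis by (simp add: NN_gt Fz_def)
  qed
  finally show ?thesis .
qed

definition W :: "(nat \<Rightarrow> real) \<Rightarrow> real" where
  "W \<omega> = Max ((\<lambda>k. min (\<omega> k) (\<omega> (M+k))) ` {..<M})"

lemma W_meas[measurable]: "W \<in> borel_measurable PPm"
  unfolding W_def by measurable

lemma W_le: "P.prob {\<omega>\<in>space PPm. W \<omega> \<le> a} = (Fz a)^M"
proof -
  have ne: "{..<M} \<noteq> {}" using M1 by (simp add: lessThan_empty_iff)
  have "{\<omega>\<in>space PPm. W \<omega> \<le> a} = (\<Inter>k\<in>{..<M}. (\<lambda>\<omega>. min (\<omega> k) (\<omega> (M+k))) -` {..a} \<inter> space PPm)"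
    using ne by (auto simp: W_def)
  then have "P.prob {\<omega>\<in>space PPm. W \<omega> \<le> a} = (\<Prod>k\<in>{..<M}. P.prob ((\<lambda>\<omega>. min (\<omega> k) (\<omega> (M+k))) -` {..a} \<inter> space PPm))"
    using P.indep_varsD_finite[OF indep_Z ne] by simp
  also have "\<dots> = (\<Prod>k\<in>{..<M}. Fz a)"
  proof (rule prod.cong[OF refl])
    fix k assume "k \<in> {..<M}"
    then have "P.prob {\<omega>\<in>space PPm. min (\<omega> k) (\<omega> (M+k)) \<le> a} = Fz a" by (intro Z_le) simp
    moreover have "(\<lambda>\<omega>. min (\<omega> k) (\<omega> (M+k))) -` {..a} \<inter> space PPm = {\<omega>\<in>space PPm. min (\<omega> k) (\<omega> (M+k)) \<le> a}"
      by auto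
    ultimately show "P.prob ((\<lambda>\<omega>. min (\<omega> k) (\<omega> (M+k))) -` {..a} \<inter> space PPm) = Fz a" by simp
  qed
  finally show ?thesis by simp
qed

lemma W_distr: "distributed PPm lborel W (hdn M (g/2))"
proof -
  define G where "G a = (if 0 \<le> a then (1 - exp(-a/(g/2)))^M else 0)" for a
  have 1: "(\<integral>\<^sup>+x. ennreal (hdn M (g/2) x * indicator {..a} x) \<partial>lborel) = ennreal (G a)" for a
  proof -
    have eq: "(\<lambda>x. ennreal (hdn M (g/2) x * indicator {..a} x)) = (\<lambda>x. ennreal (hdn M (g/2) x) * indicator {..a} x)"
      by (auto split: split_indicator)
    show ?thesis unfolding eq G_def by (rule hdn_cdf) (use gpos M1 in auto)
  qed
  have 2: "emeasure PPm {x\<in>space PPm. W x \<le> a} = ennreal (G a)" for a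
    using W_le[of a] M1 by (simp add: P.emeasure_eq_measure Fz_def G_def)
  have 3: "AE x in lborel. 0 \<le> hdn M (g/2) x" using gpos by (simp add: hdn_nonneg)
  show ?thesis
    by (rule distributedI_borel_atMost[OF W_meas _ 3 1 2]) simp
qed

definition L' :: "real \<Rightarrow> real" where "L' x = log 2 (1 + max x 0)"

lemma L'_meas[measurable]: "L' \<in> borel_measurable borel"
  unfolding L'_def by measurable

lemma L'_mono: "mono L'"
  by (auto simp: mono_def L'_def)

lemma AE_nonneg: "AE \<omega> in PPm. \<forall>i\<in>{..<2*M}. 0 \<le> \<omega> i"
proof (rule eventually_ball_finite)
  show "\<forall>i\<in>{..<2*M}. AE \<omega> in PPm. 0 \<le> \<omega> i"
  proof
    fix i assume i: "i \<in> {..<2*M}"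
    have "AE x in NN g. 0 \<le> x"
      unfolding NN_def by (subst AE_density) (auto simp: exponential_density_def)
    then show "AE \<omega> in PPm. 0 \<le> \<omega> i" unfolding PPm_def by (rule Q.AE_component[OF i])
  qed
qed simp

lemma pointwise: assumes "\<forall>i\<in>{..<2*M}. 0 \<le> \<omega> i"
  shows "Max ((\<lambda>k. min (log 2 (1 + \<omega> k)) (log 2 (1 + \<omega> (M + k)))) ` {..<M}) = L' (W \<omega>)"
proof -
  have ne: "{..<M} \<noteq> {}" using M1 by (simp add: lessThan_empty_iff)
  have "L' (W \<omega>) = Max (L' ` (\<lambda>k. min (\<omega> k) (\<omega> (M+k))) ` {..<M})"
    unfolding W_def using ne by (intro mono_Max_commute L'_mono) auto
  also have "\<dots> = Max ((\<lambda>k. min (log 2 (1 + \<omega> k)) (log 2 (1 + \<omega> (M + k)))) ` {..<M})"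
  proof -
    have "L' (min (\<omega> k) (\<omega> (M+k))) = min (log 2 (1 + \<omega> k)) (log 2 (1 + \<omega> (M + k)))" if k: "k < M" for k
    proof -
      have a: "0 \<le> \<omega> k" "0 \<le> \<omega> (M+k)" using assms k by auto
      then show ?thesis by (auto simp: L'_def min_def)
    qed
    then show ?thesis unfolding image_image by (intro arg_cong[where f=Max] image_cong) auto
  qed
  finally show ?thesis by simp
qed

lemma Rconv_int: "(\<integral>\<omega>. Max ((\<lambda>k. min (log 2 (1 + \<omega> k)) (log 2 (1 + \<omega> (M + k)))) ` {..<M}) \<partial>PPm) = (\<integral>x. hdn M (g/2) x * log 2 (1+x) \<partial>lborel)"
proof -
  have "(\<integral>x. hdn M (g/2) x * L' x \<partial>lborel) = (\<integral>\<omega>. L' (W \<omega>) \<partial>PPm)"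
    by (rule distributed_integral[OF W_distr]) (auto simp: L'_def gpos hdn_nonneg)
  also have "\<dots> = (\<integral>\<omega>. Max ((\<lambda>k. min (log 2 (1 + \<omega> k)) (log 2 (1 + \<omega> (M + k)))) ` {..<M}) \<partial>PPm)"
    by (intro integral_cong_AE) (auto intro!: AE_mp[OF AE_nonneg AE_I2] pointwise[symmetric] simp del: ball_simps)
  also have "(\<integral>x. hdn M (g/2) x * L' x \<partial>lborel) = (\<integral>x. hdn M (g/2) x * log 2 (1+x) \<partial>lborel)"
    by (rule Bochner_Integration.integral_cong[OF refl]) (auto simp: L'_def hdn_def)
  finally show ?thesis by simp
qed

end

lemma RSD_eq: assumes M1: "M \<ge> 1" and g: "g > 0"
  shows "R_SD M g = 1/2 * (\<integral>x. hdn (2*M) g x * log 2 (1+x) \<partial>lborel)"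
proof -
  have "(LBINT x:{0..}. log 2 (1 + x) * f_gamma g x * (F_gamma g x) ^ (2 * M - 1))
      = (\<integral>x. hdn (2*M) g x * log 2 (1+x) / real (2*M) \<partial>lborel)"
    unfolding set_lebesgue_integral_def
    by (rule Bochner_Integration.integral_cong[OF refl]) (use M1 in \<open>auto simp: hdn_def indicator_def f_gamma_def F_gamma_def\<close>)
  also have "\<dots> = (\<integral>x. hdn (2*M) g x * log 2 (1+x) \<partial>lborel) / real (2*M)"
    by simp
  finally show ?thesis unfolding R_SD_def using M1 by simp
qed

lemma Rconv_eq: assumes M1: "M \<ge> 1" and g: "g > 0"
  shows "R_conv M g = 1/2 * (\<integral>x. hdn M (g/2) x * log 2 (1+x) \<partial>lborel)"
proof -
  have "link_snrs M g = PPm M g" unfolding link_snrs_def PPm_def[OF M1 g] NN_def ..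
  then show ?thesis unfolding R_conv_def using Rconv_int[OF M1 g] by simp
qed

lemma half_filter: "filterlim (\<lambda>g::real. g/2) (at_right 0) (at_right 0)"
  by (rule filterlim_at_withinI) (auto intro!: tendsto_eq_intros eventually_at_right_less[THEN eventually_mono])

lemma limSD: assumes "M \<ge> 1"
  shows "((\<lambda>g. R_SD M g / g) \<longlongrightarrow> harm (2*M) / (2 * ln 2)) (at_right 0)"
proof -
  have "((\<lambda>g. 1/2 * ((\<integral>x. hdn (2*M) g x * log 2 (1+x) \<partial>lborel) / g)) \<longlongrightarrow> 1/2 * (harm (2*M) / ln 2)) (at_right 0)"
    by (intro tendsto_mult tendsto_const limA) (use assms in simp)
  moreover have "\<forall>\<^sub>F g in at_right 0. 1/2 * ((\<integral>x. hdn (2*M) g x * log 2 (1+x) \<partial>lborel) / g) = R_SD M g / g"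
    using eventually_at_right_less[of "0::real"] by eventually_elim (simp add: RSD_eq[OF assms])
  ultimately show ?thesis by (auto elim: Lim_transform_eventually)
qed

lemma limConv: assumes "M \<ge> 1"
  shows "((\<lambda>g. R_conv M g / g) \<longlongrightarrow> harm M / (4 * ln 2)) (at_right 0)"
proof -
  have "((\<lambda>g. 1/4 * ((\<lambda>m. (\<integral>x. hdn M m x * log 2 (1+x) \<partial>lborel) / m) (g/2))) \<longlongrightarrow> 1/4 * (harm M / ln 2)) (at_right 0)"
    by (intro tendsto_mult tendsto_const filterlim_compose[OF limA[OF assms] half_filter])
  moreover have "\<forall>\<^sub>F g in at_right 0. 1/4 * ((\<lambda>m. (\<integral>x. hdn M m x * log 2 (1+x) \<partial>lborel) / m) (g/2)) = R_conv M g / g"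
    using eventually_at_right_less[of "0::real"] by eventually_elim (simp add: Rconv_eq[OF assms])
  ultimately show ?thesis by (auto elim: Lim_transform_eventually)
qed

lemma asymp_from_lim:
  assumes "((\<lambda>g. f g / g) \<longlongrightarrow> L) (at_right (0::real))" "L \<noteq> 0"
  shows "f \<sim>[at_right 0] (\<lambda>g. g * L)"
proof (rule asymp_equivI')
  have "((\<lambda>g. (f g / g) / L) \<longlongrightarrow> L / L) (at_right (0::real))"
    by (intro tendsto_divide assms tendsto_const)
  moreover have "\<forall>\<^sub>F g in at_right 0. (f g / g) / L = f g / (g * L)"
    by simp
  ultimately show "((\<lambda>g. f g / (g * L)) \<longlongrightarrow> 1) (at_right 0)"
    using assms(2) by (auto elim: Lim_transform_eventually)
qed

theorem mainTheorem5:
  shows "(\<forall>M::nat. M \<ge> 1 \<longrightarrow>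
            R_SD M \<sim>[at_right 0] (\<lambda>g. g / (2 * ln 2) * (\<Sum>k=1..2*M. 1 / real k)) \<and>
            R_conv M \<sim>[at_right 0] (\<lambda>g. g / (4 * ln 2) * (\<Sum>k=1..M. 1 / real k)) \<and>
            ((\<lambda>g. R_SD M g / R_conv M g) \<longlongrightarrow>
               2 * (\<Sum>k=1..2*M. 1 / real k) / (\<Sum>k=1..M. 1 / real k)) (at_right 0) \<and>
            2 * (\<Sum>k=1..2*M. 1 / real k) / (\<Sum>k=1..M. 1 / real k) \<in> {2..3})
       \<and> 2 * (\<Sum>k=1..2*1. 1 / real k) / (\<Sum>k=1..1. 1 / real k) = 3
       \<and> (\<lambda>M::nat. 2 * (\<Sum>k=1..2*M. 1 / real k) / (\<Sum>k=1..M. 1 / real k)) \<longlonglongrightarrow> 2"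
  unfolding hsum
proof (intro conjI allI impI)
  fix M :: nat assume M: "M \<ge> 1"
  have hM: "harm M > (0::real)" using M by (intro harm_pos) simp
  have h2M: "harm (2*M) > (0::real)" using M by (intro harm_pos) simp
  have l2: "ln (2::real) > 0" by simp
  have "R_SD M \<sim>[at_right 0] (\<lambda>g. g * (harm (2*M) / (2 * ln 2)))"
    by (rule asymp_from_lim[OF limSD[OF M]]) (use h2M in \<open>simp del: harm_pos_iff\<close>)
  then show "R_SD M \<sim>[at_right 0] (\<lambda>g. g / (2 * ln 2) * harm (2*M))"
    by (simp add: field_simps)
  have "R_conv M \<sim>[at_right 0] (\<lambda>g. g * (harm M / (4 * ln 2)))"
    by (rule asymp_from_lim[OF limConv[OF M]]) (use hM in \<open>simp del: harm_pos_iff\<close>)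
  then show "R_conv M \<sim>[at_right 0] (\<lambda>g. g / (4 * ln 2) * harm M)"
    by (simp add: field_simps)
  have "((\<lambda>g. (R_SD M g / g) / (R_conv M g / g)) \<longlongrightarrow> (harm (2*M) / (2 * ln 2)) / (harm M / (4 * ln 2))) (at_right 0)"
    by (intro tendsto_divide limSD limConv M) (use hM in \<open>simp del: harm_pos_iff\<close>)
  moreover have "(harm (2*M) / (2 * ln 2)) / (harm M / (4 * ln 2)) = 2 * harm (2*M) / (harm M :: real)"
    using hM l2 by (simp add: field_simps)
  moreover have "\<forall>\<^sub>F g in at_right 0. (R_SD M g / g) / (R_conv M g / g) = R_SD M g / R_conv M g"
    using eventually_at_right_less[of "0::real"] by eventually_elim simp
  ultimately show "((\<lambda>g. R_SD M g / R_conv M g) \<longlongrightarrow> 2 * harm (2*M) / harm M) (at_right 0)"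
    by (auto elim: Lim_transform_eventually)
  have "harm M \<le> (harm (2*M) :: real)" by (rule harm_mono) simp
  then have a: "2 \<le> 2 * harm (2*M) / (harm M :: real)" using hM by (simp add: field_simps)
  have b: "2 * harm (2*M) / (harm M :: real) \<le> 3" using harm_2_le[of M] hM by (simp add: field_simps)
  show "2 * harm (2*M) / harm M \<in> {2..(3::real)}" using a b by simp
next
  show "2 * harm (2*1) / harm 1 = (3::real)" by (simp add: harm_def eval_nat_numeral)
next
  show "(\<lambda>M::nat. 2 * harm (2*M) / harm M) \<longlonglongrightarrow> (2::real)" by (rule ratio_lim)
qed

end
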